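(* Let $n\ge 1$, $\lambda>0$, and let $\mathbf{y}$ be an $n\times 2$ data matrix whose rows are modeled as i.i.d. $\mathcal{N}_2(0,\boldsymbol{\Omega}^{-1})$, so that the likelihood is $f(\mathbf{y}\mid\boldsymbol{\Omega})=(2\pi)^{-n}|\boldsymbol{\Omega}|^{n/2}\exp\{-\tfrac12\mathrm{tr}(\mathbf{S}\boldsymbol{\Omega})\}$ with $\mathbf{S}=\mathbf{y}^T\mathbf{y}=\begin{bmatrix}s_{11}&s_{12}\\ s_{12}&s_{22}\end{bmatrix}$. Equip $\boldsymbol{\Omega}=\begin{bmatrix}\omega_{11}&\omega_{12}\\ \omega_{12}&\omega_{22}\end{bmatrix}$ with the Bayesian graphical lasso prior $$f(\boldsymbol{\Omega}\mid\lambda)=C_{\mathrm{BGL}}^{-1}\,\frac{\lambda}{2}e^{-\lambda|\omega_{12}|}\,\prod_{j=1}^{2}\frac{\lambda}{2}e^{-\lambda\omega_{jj}/2}\;\mathbf{1}(\boldsymbol{\Omega}\text{ positive definite}),$$ where $C_{\mathrm{BGL}}$ is the normalizing constant. Then the marginal likelihood $f(\mathbf{y}\mid\lambda)=\int f(\mathbf{y}\mid\boldsymbol{\Omega})f(\boldsymbol{\Omega}\mid\lambda)\,d\boldsymbol{\Omega}$ equals $$C_{\mathrm{BGL}}^{-1}\frac{\lambda^3\,\Gamma\!\left(\frac n2+1\right)\Gamma\!\left(\frac{n+3}{2}\right)}{\pi^{n-\frac12}\Big[(\lambda+s_{11})(\lambda+s_{22})-(\lambda-|s_{12}|)^2\Big]^{(n+3)/2}}\;\mathbb{E}_t\big(F(t)\big),$$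 where $t\sim\mathrm{Gamma}\!\left(\text{shape}=\frac{n+3}{2},\ \text{rate}=\frac{(\lambda+s_{11})(\lambda+s_{22})-(\lambda-|s_{12}|)^2}{2}\right)$ and $$F(t)=\Phi\!\left[\lambda t^{1/2}\left(\frac{|s_{12}|}{\lambda}-1\right)\right]+\exp(2\lambda|s_{12}|t)\,\Phi\!\left[-\lambda t^{1/2}\left(\frac{|s_{12}|}{\lambda}+1\right)\right],$$ and moreover $C_{\mathrm{BGL}}=\int_0^\infty x^{1/2}\int_x^\infty y^{-1/2}e^{-y}\,dy\,dx\approx 0.67$.
   Context: $\Gamma(\cdot)$ denotes the gamma function and $\Phi$ the standard normal cumulative distribution function. $\mathrm{Gamma}(\text{shape}=a,\text{rate}=b)$ has density proportional to $x^{a-1}e^{-bx}$ on $x>0$. The integral defining the marginal likelihood is over all real $\omega_{11},\omega_{12},\omega_{22}$ (the prior vanishes outside positive definite matrices). *)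

theory Defs
  imports "HOL-Analysis.Analysis" "HOL-Probability.Probability"
begin

definition Phi :: "real \<Rightarrow> real" where
  "Phi x = (LINT t:{..x}|lborel. std_normal_density t)"

definition gamma_dens :: "real \<Rightarrow> real \<Rightarrow> real \<Rightarrow> real" where
  "gamma_dens a b t = (if t > 0 then b powr a * t powr (a - 1) * exp (- b * t) / Gamma a else 0)"

definition gamma_expect :: "real \<Rightarrow> real \<Rightarrow> (real \<Rightarrow> real) \<Rightarrow> real" where
  "gamma_expect a b F = (LINT t|lborel. F t * gamma_dens a b t)"

definition pos_def2 :: "real \<Rightarrow> real \<Rightarrow> real \<Rightarrow> bool" where
  "pos_def2 w11 w12 w22 \<longleftrightarrow>
     (\<forall>x1 x2. (x1, x2) \<noteq> (0, 0) \<longrightarrow> w11 * x1\<^sup>2 + 2 * w12 * x1 * x2 + w22 * x2\<^sup>2 > 0)"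

text \<open>Entries of S = y^T y for an n x 2 data matrix y (rows 1..n, columns 1,2).\<close>
definition Smat :: "nat \<Rightarrow> (nat \<Rightarrow> nat \<Rightarrow> real) \<Rightarrow> nat \<Rightarrow> nat \<Rightarrow> real" where
  "Smat n y j k = (\<Sum>i=1..n. y i j * y i k)"

definition lik :: "nat \<Rightarrow> (nat \<Rightarrow> nat \<Rightarrow> real) \<Rightarrow> real \<Rightarrow> real \<Rightarrow> real \<Rightarrow> real" where
  "lik n y w11 w12 w22 =
     (2 * pi) powr (- real n) * (w11 * w22 - w12\<^sup>2) powr (real n / 2)
     * exp (- (Smat n y 1 1 * w11 + 2 * Smat n y 1 2 * w12 + Smat n y 2 2 * w22) / 2)"

definition bgl_unnorm :: "real \<Rightarrow> real \<Rightarrow> real \<Rightarrow> real \<Rightarrow> real" where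
  "bgl_unnorm lam w11 w12 w22 =
     lam / 2 * exp (- lam * \<bar>w12\<bar>) * ((lam / 2) * exp (- lam * w11 / 2)) * ((lam / 2) * exp (- lam * w22 / 2))
     * (if pos_def2 w11 w12 w22 then 1 else 0)"

definition C_BGL :: "real \<Rightarrow> real" where
  "C_BGL lam = (LINT w|lborel. (\<lambda>(w11, w12, w22). bgl_unnorm lam w11 w12 w22) (w :: real \<times> real \<times> real))"

definition bgl_prior :: "real \<Rightarrow> real \<Rightarrow> real \<Rightarrow> real \<Rightarrow> real" where
  "bgl_prior lam w11 w12 w22 = bgl_unnorm lam w11 w12 w22 / C_BGL lam"

definition marg_lik :: "nat \<Rightarrow> (nat \<Rightarrow> nat \<Rightarrow> real) \<Rightarrow> real \<Rightarrow> real" where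
  "marg_lik n y lam = (LINT w|lborel.
     (\<lambda>(w11, w12, w22). lik n y w11 w12 w22 * bgl_prior lam w11 w12 w22) (w :: real \<times> real \<times> real))"

end

theory Submission
  imports Defs
begin

lemma pos_def2_iff: "pos_def2 a c b \<longleftrightarrow> a > 0 \<and> a * b - c\<^sup>2 > 0"
proof
  assume h: "pos_def2 a c b"
  have a: "a > 0" using h[unfolded pos_def2_def, rule_format, of 1 0] by simp
  have "a * c\<^sup>2 + 2 * c * c * (- a) + b * (- a)\<^sup>2 > 0"
    using h[unfolded pos_def2_def, rule_format, of c "-a"] a by simp
  then have "a * (a * b - c\<^sup>2) > 0" by (simp add: power2_eq_square algebra_simps)
  with a show "a > 0 \<and> a * b - c\<^sup>2 > 0" by (simp add: zero_less_mult_iff)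
next
  assume h: "a > 0 \<and> a * b - c\<^sup>2 > 0"
  show "pos_def2 a c b" unfolding pos_def2_def
  proof (intro allI impI)
    fix x1 x2 :: real assume nz: "(x1, x2) \<noteq> (0, 0)"
    have eq: "a * (a * x1\<^sup>2 + 2 * c * x1 * x2 + b * x2\<^sup>2) = (a * x1 + c * x2)\<^sup>2 + (a * b - c\<^sup>2) * x2\<^sup>2"
      by (simp add: power2_eq_square algebra_simps)
    have "(a * x1 + c * x2)\<^sup>2 + (a * b - c\<^sup>2) * x2\<^sup>2 > 0"
    proof (cases "x2 = 0")
      case True then have "x1 \<noteq> 0" using nz by simp
      then show ?thesis using True h by simp
    next
      case False then show ?thesis using h
        by (intro add_nonneg_pos) auto
    qed
    then have "a * (a * x1\<^sup>2 + 2 * c * x1 * x2 + b * x2\<^sup>2) > 0" using eq by simp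
    then show "a * x1\<^sup>2 + 2 * c * x1 * x2 + b * x2\<^sup>2 > 0" using h by (simp add: zero_less_mult_iff)
  qed
qed

lemma Phi_nn: "ennreal (Phi x) = (\<integral>\<^sup>+ z. ennreal (indicator {..x} z * std_normal_density z) \<partial>lborel)"
proof -
  have int: "integrable lborel (\<lambda>z. std_normal_density z * indicator {..x} z)"
    by (intro integrable_real_mult_indicator integrable_normal_density) auto
  have "Phi x = (LINT z|lborel. indicator {..x} z * std_normal_density z)"
    unfolding Phi_def set_lebesgue_integral_def by simp
  also have "ennreal \<dots> = (\<integral>\<^sup>+ z. ennreal (indicator {..x} z * std_normal_density z) \<partial>lborel)"
    using int by (subst nn_integral_eq_integral) (auto simp: mult.commute)
  finally show ?thesis .
qed

lemma Phi_nonneg: "Phi x \<ge> 0"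
  unfolding Phi_def set_lebesgue_integral_def by (intro integral_nonneg_AE) auto

lemma Phi_mono: "mono Phi"
proof
  fix x y :: real assume "x \<le> y"
  then have "ennreal (Phi x) \<le> ennreal (Phi y)"
    unfolding Phi_nn by (intro nn_integral_mono) (auto simp: indicator_def)
  then show "Phi x \<le> Phi y" using Phi_nonneg by simp
qed

lemma Phi_measurable[measurable]: "Phi \<in> borel_measurable borel"
  using Phi_mono by (rule borel_measurable_mono)

lemma gamma_rate:
  assumes rho: "\<rho> > 0" and k: "k > -1"
  shows "(\<integral>\<^sup>+u. ennreal (indicator {0<..} u * u powr k * exp (- \<rho> * u)) \<partial>lborel)
         = ennreal (Gamma (k + 1) / \<rho> powr (k + 1))"
proof -
  let ?f = "\<lambda>u. ennreal (indicator {0<..} u * u powr k * exp (- \<rho> * u))"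
  have "integral\<^sup>N lborel ?f = ennreal \<bar>1/\<rho>\<bar> * (\<integral>\<^sup>+t. ?f (0 + 1/\<rho> * t) \<partial>lborel)"
    apply (rule nn_integral_real_affine)
    subgoal by measurable
    subgoal using rho by simp
    done
  also have "(\<integral>\<^sup>+t. ?f (0 + 1/\<rho> * t) \<partial>lborel)
      = (\<integral>\<^sup>+t. ennreal (\<rho> powr (-k)) * ennreal (indicator {0..} t * t powr (k + 1 - 1) / exp t) \<partial>lborel)"
  proof (intro nn_integral_cong)
    fix t :: real
    show "?f (0 + 1/\<rho> * t) = ennreal (\<rho> powr (-k)) * ennreal (indicator {0..} t * t powr (k + 1 - 1) / exp t)"
    proof (cases "t > 0")
      case True
      have p: "(t / \<rho>) powr k = \<rho> powr (-k) * t powr k"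
        using True rho by (simp add: powr_mult powr_minus_divide powr_divide)
      have e: "exp (- t) = 1 / exp t"
        using rho by (simp add: exp_minus field_simps)
      have r: "\<rho> * (t / \<rho>) = t" using rho by simp
      have "?f (0 + 1/\<rho> * t) = ennreal ((t / \<rho>) powr k * exp (- t))"
        using True rho by (simp add: indicator_def r)
      also have "\<dots> = ennreal (\<rho> powr (-k) * (t powr k / exp t))"
        by (simp only: p e) simp
      finally have "?f (0 + 1/\<rho> * t) = ennreal (\<rho> powr (-k) * (t powr k / exp t))" .
      also have "\<dots> = ennreal (\<rho> powr (-k)) * ennreal (t powr k / exp t)"
        by (rule ennreal_mult) auto
      finally show ?thesis using True by (simp add: indicator_def)
    next
      case False
      then have "t / \<rho> \<le> 0" using rho by (simp add: divide_nonpos_pos)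
      then have "\<not> (0 < 1/\<rho> * t)" by simp
      then show ?thesis using False by (simp add: indicator_def)
    qed
  qed
  also have "\<dots> = ennreal (\<rho> powr (-k)) * ennreal (Gamma (k + 1))"
    apply (subst nn_integral_cmult)
    subgoal by measurable
    subgoal using Gamma_conv_nn_integral_real[of "k+1"] k by simp
    done
  also have "\<dots> = ennreal (\<rho> powr (-k) * Gamma (k + 1))"
    by (rule ennreal_mult[symmetric]) (use k in \<open>auto intro!: Gamma_real_pos less_imp_le\<close>)
  finally have "integral\<^sup>N lborel ?f = ennreal (1/\<rho>) * ennreal (\<rho> powr (-k) * Gamma (k + 1))"
    using rho by simp
  also have "\<dots> = ennreal (1/\<rho> * (\<rho> powr (-k) * Gamma (k + 1)))"
    by (rule ennreal_mult[symmetric]) (use rho k in \<open>auto intro!: Gamma_real_pos less_imp_le\<close>)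
  also have "1/\<rho> * (\<rho> powr (-k) * Gamma (k + 1)) = Gamma (k + 1) / \<rho> powr (k + 1)"
    using rho by (simp add: powr_add powr_minus_divide)
  finally show ?thesis .
qed

lemma gauss_half:
  assumes v: "v > 0"
  shows "(\<integral>\<^sup>+c. ennreal (indicator {0..} c * exp (- c\<^sup>2 / (2 * v) - bt * c)) \<partial>lborel)
       = ennreal (sqrt (2 * pi * v) * exp (v * bt\<^sup>2 / 2) * Phi (- bt * sqrt v))"
proof -
  define r where "r = sqrt v"
  have r: "r > 0" "v = r\<^sup>2" using v by (auto simp: r_def)
  let ?f = "\<lambda>c. ennreal (indicator {0..} c * exp (- c\<^sup>2 / (2 * v) - bt * c))"
  have "integral\<^sup>N lborel ?f = ennreal \<bar>-r\<bar> * (\<integral>\<^sup>+z. ?f (- v * bt + - r * z) \<partial>lborel)"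
    apply (rule nn_integral_real_affine)
    subgoal by measurable
    subgoal using r by simp
    done
  also have "(\<integral>\<^sup>+z. ?f (- v * bt + - r * z) \<partial>lborel)
      = (\<integral>\<^sup>+z. ennreal (sqrt (2 * pi) * exp (v * bt\<^sup>2 / 2)) * ennreal (indicator {..- bt * r} z * std_normal_density z) \<partial>lborel)"
  proof (intro nn_integral_cong)
    fix z :: real
    have i: "indicator {0..} (- v * bt + - r * z) = (indicator {..- bt * r} z :: real)"
    proof -
      have "- v * bt + - r * z = r * (- bt * r - z)" unfolding r(2) by (simp add: power2_eq_square algebra_simps)
      then have "0 \<le> - v * bt + - r * z \<longleftrightarrow> 0 \<le> r * (- bt * r - z)" by (simp only:)
      also have "\<dots> \<longleftrightarrow> z \<le> - bt * r" using r by (simp add: zero_le_mult_iff)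
      finally show ?thesis by (simp add: indicator_def)
    qed
    have e: "- (- v * bt + - r * z)\<^sup>2 / (2 * v) - bt * (- v * bt + - r * z) = v * bt\<^sup>2 / 2 + (- z\<^sup>2 / 2)"
      unfolding r(2) using r(1) by (simp add: field_simps power2_eq_square)
    have "?f (- v * bt + - r * z) = ennreal (indicator {..- bt * r} z * (exp (v * bt\<^sup>2 / 2) * exp (- z\<^sup>2 / 2)))"
      by (simp only: i e exp_add)
    also have "\<dots> = ennreal (sqrt (2 * pi) * exp (v * bt\<^sup>2 / 2) * (indicator {..- bt * r} z * std_normal_density z))"
      by (simp add: std_normal_density_def)
    also have "\<dots> = ennreal (sqrt (2 * pi) * exp (v * bt\<^sup>2 / 2)) * ennreal (indicator {..- bt * r} z * std_normal_density z)"
      by (rule ennreal_mult) auto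
    finally show "?f (- v * bt + - r * z) = ennreal (sqrt (2 * pi) * exp (v * bt\<^sup>2 / 2)) * ennreal (indicator {..- bt * r} z * std_normal_density z)" .
  qed
  also have "\<dots> = ennreal (sqrt (2 * pi) * exp (v * bt\<^sup>2 / 2)) * ennreal (Phi (- bt * r))"
    apply (subst nn_integral_cmult)
    subgoal by measurable
    subgoal by (simp add: Phi_nn)
    done
  also have "\<dots> = ennreal (sqrt (2 * pi) * exp (v * bt\<^sup>2 / 2) * Phi (- bt * r))"
    by (rule ennreal_mult[symmetric]) (auto simp: Phi_nonneg)
  finally have "integral\<^sup>N lborel ?f = ennreal r * ennreal (sqrt (2 * pi) * exp (v * bt\<^sup>2 / 2) * Phi (- bt * r))"
    using r by simp
  also have "\<dots> = ennreal (r * (sqrt (2 * pi) * exp (v * bt\<^sup>2 / 2) * Phi (- bt * r)))"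
    by (rule ennreal_mult[symmetric]) (use r in \<open>auto simp: Phi_nonneg\<close>)
  also have "r * (sqrt (2 * pi) * exp (v * bt\<^sup>2 / 2) * Phi (- bt * r)) = sqrt (2 * pi * v) * exp (v * bt\<^sup>2 / 2) * Phi (- bt * sqrt v)"
    by (simp add: r_def real_sqrt_mult)
  finally show ?thesis .
qed

lemma gauss_neg:
  assumes v: "v > 0"
  shows "(\<integral>\<^sup>+c. ennreal (indicator {..<0} c * exp (- c\<^sup>2 / (2 * v) - q * c)) \<partial>lborel)
       = ennreal (sqrt (2 * pi * v) * exp (v * q\<^sup>2 / 2) * Phi (q * sqrt v))"
proof -
  let ?f = "\<lambda>c. ennreal (indicator {..<0} c * exp (- c\<^sup>2 / (2 * v) - q * c))"
  have "integral\<^sup>N lborel ?f = ennreal \<bar>-1\<bar> * (\<integral>\<^sup>+z. ?f (0 + - 1 * z) \<partial>lborel)"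
    apply (rule nn_integral_real_affine)
    subgoal by measurable
    subgoal by simp
    done
  also have "(\<integral>\<^sup>+z. ?f (0 + - 1 * z) \<partial>lborel)
      = (\<integral>\<^sup>+z. ennreal (indicator {0..} z * exp (- z\<^sup>2 / (2 * v) - (- q) * z)) \<partial>lborel)"
  proof (rule nn_integral_cong_AE)
    show "AE z in lborel. ?f (0 + - 1 * z) = ennreal (indicator {0..} z * exp (- z\<^sup>2 / (2 * v) - (- q) * z))"
      using AE_lborel_singleton[of "0::real"]
      by eventually_elim (auto simp: indicator_def)
  qed
  also have "\<dots> = ennreal (sqrt (2 * pi * v) * exp (v * (-q)\<^sup>2 / 2) * Phi (- (-q) * sqrt v))"
    by (rule gauss_half[OF v])
  finally show ?thesis by simp
qed

lemma cint:
  assumes v: "v > 0"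
  shows "(\<integral>\<^sup>+c. ennreal (exp (- c\<^sup>2 / (2 * v) - s * c - l * \<bar>c\<bar>)) \<partial>lborel)
       = ennreal (sqrt (2 * pi * v) * (exp (v * (s + l)\<^sup>2 / 2) * Phi (- (s + l) * sqrt v)
                    + exp (v * (s - l)\<^sup>2 / 2) * Phi ((s - l) * sqrt v)))"
proof -
  have "(\<integral>\<^sup>+c. ennreal (exp (- c\<^sup>2 / (2 * v) - s * c - l * \<bar>c\<bar>)) \<partial>lborel)
      = (\<integral>\<^sup>+c. ennreal (indicator {0..} c * exp (- c\<^sup>2 / (2 * v) - (s + l) * c))
               + ennreal (indicator {..<0} c * exp (- c\<^sup>2 / (2 * v) - (s - l) * c)) \<partial>lborel)"
    by (intro nn_integral_cong) (auto simp: indicator_def algebra_simps)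
  also have "\<dots> = (\<integral>\<^sup>+c. ennreal (indicator {0..} c * exp (- c\<^sup>2 / (2 * v) - (s + l) * c)) \<partial>lborel)
               + (\<integral>\<^sup>+c. ennreal (indicator {..<0} c * exp (- c\<^sup>2 / (2 * v) - (s - l) * c)) \<partial>lborel)"
    by (rule nn_integral_add) measurable
  also have "\<dots> = ennreal (sqrt (2 * pi * v) * exp (v * (s + l)\<^sup>2 / 2) * Phi (- (s + l) * sqrt v))
                + ennreal (sqrt (2 * pi * v) * exp (v * (s - l)\<^sup>2 / 2) * Phi ((s - l) * sqrt v))"
    by (simp only: gauss_half[OF v] gauss_neg[OF v])
  also have "\<dots> = ennreal (sqrt (2 * pi * v) * exp (v * (s + l)\<^sup>2 / 2) * Phi (- (s + l) * sqrt v)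
                + sqrt (2 * pi * v) * exp (v * (s - l)\<^sup>2 / 2) * Phi ((s - l) * sqrt v))"
    by (rule ennreal_plus[symmetric]) (use v in \<open>auto intro!: mult_nonneg_nonneg Phi_nonneg\<close>)
  finally show ?thesis by (simp add: algebra_simps)
qed

lemma aint:
  assumes A: "A > 0" and k: "k > -1"
  shows "(\<integral>\<^sup>+a. ennreal (if 0 < a \<and> 0 < a * b - c\<^sup>2 then (a * b - c\<^sup>2) powr k * exp (- (A * a + B * b) / 2 - s * c - l * \<bar>c\<bar>) else 0) \<partial>lborel)
       = ennreal (if b > 0 then Gamma (k + 1) / (A / 2) powr (k + 1) * b powr k * exp (- c\<^sup>2 / (2 * (b / A)) - B * b / 2 - s * c - l * \<bar>c\<bar>) else 0)"
proof (cases "b > 0")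
  case False
  have n: "(0 < a \<and> 0 < a * b - c\<^sup>2) = False" for a
  proof (rule iffI[OF _ FalseE])
    assume h: "0 < a \<and> 0 < a * b - c\<^sup>2"
    then have "a * b > 0" by (smt (verit) zero_le_power2)
    then show False using h False by (simp add: zero_less_mult_iff)
  qed
  show ?thesis using False by (simp only: n if_False) simp
next
  case True
  let ?f = "\<lambda>a. ennreal (if 0 < a \<and> 0 < a * b - c\<^sup>2 then (a * b - c\<^sup>2) powr k * exp (- (A * a + B * b) / 2 - s * c - l * \<bar>c\<bar>) else 0)"
  let ?K = "b powr k * exp (- c\<^sup>2 / (2 * (b / A)) - B * b / 2 - s * c - l * \<bar>c\<bar>)"
  have "integral\<^sup>N lborel ?f = ennreal \<bar>1\<bar> * (\<integral>\<^sup>+u. ?f (c\<^sup>2 / b + 1 * u) \<partial>lborel)"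
    apply (rule nn_integral_real_affine)
    subgoal by measurable
    subgoal by simp
    done
  also have "(\<integral>\<^sup>+u. ?f (c\<^sup>2 / b + 1 * u) \<partial>lborel)
     = (\<integral>\<^sup>+u. ennreal (indicator {0<..} u * u powr k * exp (- (A / 2) * u)) * ennreal ?K \<partial>lborel)"
  proof (intro nn_integral_cong)
    fix u :: real
    have d: "(c\<^sup>2 / b + u) * b - c\<^sup>2 = b * u" using True by (simp add: field_simps)
    show "?f (c\<^sup>2 / b + 1 * u) = ennreal (indicator {0<..} u * u powr k * exp (- (A / 2) * u)) * ennreal ?K"
    proof (cases "u > 0")
      case False
      then have "\<not> 0 < b * u" using True by (simp add: zero_less_mult_iff)
      then show ?thesis using False by (simp only: mult_1_left d) simp
    next
      case u: True
      have pos: "0 < c\<^sup>2 / b + 1 * u" using True u by (simp add: add_nonneg_pos)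
      have ex: "exp (- (A * (c\<^sup>2 / b + 1 * u) + B * b) / 2 - s * c - l * \<bar>c\<bar>)
          = exp (- (A / 2) * u) * exp (- c\<^sup>2 / (2 * (b / A)) - B * b / 2 - s * c - l * \<bar>c\<bar>)"
        unfolding exp_add[symmetric] using True A by (simp add: field_simps)
      have "?f (c\<^sup>2 / b + 1 * u) = ennreal ((b * u) powr k * exp (- (A * (c\<^sup>2 / b + 1 * u) + B * b) / 2 - s * c - l * \<bar>c\<bar>))"
        using pos u True by (simp only: mult_1_left d) simp
      also have "\<dots> = ennreal ((u powr k * exp (- (A / 2) * u)) * ?K)"
        unfolding ex using True u by (simp add: powr_mult mult_ac)
      also have "\<dots> = ennreal (u powr k * exp (- (A / 2) * u)) * ennreal ?K"
        by (rule ennreal_mult) auto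
      finally show ?thesis using u by simp
    qed
  qed
  also have "\<dots> = ennreal (Gamma (k + 1) / (A / 2) powr (k + 1)) * ennreal ?K"
    apply (subst nn_integral_multc)
    subgoal by measurable
    subgoal using gamma_rate[of "A/2" k] A k by simp
    done
  also have "\<dots> = ennreal (Gamma (k + 1) / (A / 2) powr (k + 1) * ?K)"
    by (rule ennreal_mult[symmetric]) (use k in \<open>auto intro!: Gamma_real_pos less_imp_le\<close>)
  finally show ?thesis using True by (simp add: mult_ac)
qed

definition Hf :: "real \<Rightarrow> real \<Rightarrow> real \<Rightarrow> real \<Rightarrow> real \<Rightarrow> real \<times> real \<times> real \<Rightarrow> real" where
  "Hf k A B s l w = (if pos_def2 (fst w) (fst (snd w)) (snd (snd w))
      then (fst w * snd (snd w) - (fst (snd w))\<^sup>2) powr k * exp (- (A * fst w + B * snd (snd w)) / 2 - s * fst (snd w) - l * \<bar>fst (snd w)\<bar>) else 0)"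

lemma Hf_alt: "Hf k A B s l (a, c, b) = (if 0 < a \<and> 0 < a * b - c\<^sup>2 then (a * b - c\<^sup>2) powr k * exp (- (A * a + B * b) / 2 - s * c - l * \<bar>c\<bar>) else 0)"
  by (simp add: Hf_def pos_def2_iff)

lemma Hf_alt2: "Hf k A B s l = (\<lambda>w. if 0 < fst w \<and> 0 < fst w * snd (snd w) - (fst (snd w))\<^sup>2 then (fst w * snd (snd w) - (fst (snd w))\<^sup>2) powr k * exp (- (A * fst w + B * snd (snd w)) / 2 - s * fst (snd w) - l * \<bar>fst (snd w)\<bar>) else 0)"
  by (simp add: Hf_def pos_def2_iff fun_eq_iff)

lemma Hf_meas3: "(\<lambda>w. ennreal (Hf k A B s l w)) \<in> borel_measurable (lborel \<Otimes>\<^sub>M (lborel \<Otimes>\<^sub>M lborel))"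
  unfolding Hf_alt2 by measurable

lemma Hf_meas2: "(\<lambda>w. ennreal (Hf k A B s l w)) \<in> borel_measurable (lborel \<Otimes>\<^sub>M lborel)"
  using Hf_meas3 by (simp only: lborel_prod)

lemma gmeas: "(\<lambda>y::real\<times>real. ennreal (if snd y > 0 then G * snd y powr k * exp (- (fst y)\<^sup>2 / (2 * (snd y / A)) - B * snd y / 2 - s * fst y - l * \<bar>fst y\<bar>) else 0)) \<in> borel_measurable (lborel \<Otimes>\<^sub>M lborel)"
  by measurable

lemma step_ab:
  assumes A: "A > 0" and k: "k > -1" and G: "G = Gamma (k + 1) / (A / 2) powr (k + 1)"
  shows "(\<integral>\<^sup>+w. ennreal (Hf k A B s l w) \<partial>lborel)
    = (\<integral>\<^sup>+b. \<integral>\<^sup>+c. ennreal (if b > 0 then G * b powr k * exp (- c\<^sup>2 / (2 * (b / A)) - B * b / 2 - s * c - l * \<bar>c\<bar>) else 0) \<partial>lborel \<partial>lborel)"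
proof -
  have L: "(lborel :: (real \<times> real \<times> real) measure) = lborel \<Otimes>\<^sub>M lborel" by (rule lborel_prod[symmetric])
  have L2: "(lborel :: (real \<times> real) measure) = lborel \<Otimes>\<^sub>M lborel" by (rule lborel_prod[symmetric])
  have "(\<integral>\<^sup>+w. ennreal (Hf k A B s l w) \<partial>lborel) = (\<integral>\<^sup>+w. ennreal (Hf k A B s l w) \<partial>(lborel \<Otimes>\<^sub>M lborel))"
    by (subst L) (rule refl)
  also have "\<dots> = (\<integral>\<^sup>+y. \<integral>\<^sup>+a. ennreal (Hf k A B s l (a, y)) \<partial>lborel \<partial>lborel)"
    by (rule lborel_pair.nn_integral_snd[symmetric, OF Hf_meas2])
  also have "\<dots> = (\<integral>\<^sup>+y. ennreal (if snd y > 0 then G * snd y powr k * exp (- (fst y)\<^sup>2 / (2 * (snd y / A)) - B * snd y / 2 - s * fst y - l * \<bar>fst y\<bar>) else 0) \<partial>lborel)"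
  proof (intro nn_integral_cong)
    fix y :: "real \<times> real"
    obtain c b where y: "y = (c, b)" by (cases y)
    show "(\<integral>\<^sup>+a. ennreal (Hf k A B s l (a, y)) \<partial>lborel) = ennreal (if snd y > 0 then G * snd y powr k * exp (- (fst y)\<^sup>2 / (2 * (snd y / A)) - B * snd y / 2 - s * fst y - l * \<bar>fst y\<bar>) else 0)"
      unfolding y Hf_alt G using aint[OF A k, of b c B s l] by simp
  qed
  also have "\<dots> = (\<integral>\<^sup>+y. ennreal (if snd y > 0 then G * snd y powr k * exp (- (fst y)\<^sup>2 / (2 * (snd y / A)) - B * snd y / 2 - s * fst y - l * \<bar>fst y\<bar>) else 0) \<partial>(lborel \<Otimes>\<^sub>M lborel))"
    by (subst L2) (rule refl)
  also have "\<dots> = (\<integral>\<^sup>+b. \<integral>\<^sup>+c. ennreal (if b > 0 then G * b powr k * exp (- c\<^sup>2 / (2 * (b / A)) - B * b / 2 - s * c - l * \<bar>c\<bar>) else 0) \<partial>lborel \<partial>lborel)"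
    using lborel_pair.nn_integral_snd[symmetric, OF gmeas[of G k A B s l]] by (simp only: prod.sel)
  finally show ?thesis .
qed

lemma step_c:
  assumes A: "A > 0" and G: "G \<ge> 0"
  shows "(\<integral>\<^sup>+c. ennreal (if b > 0 then G * b powr k * exp (- c\<^sup>2 / (2 * (b / A)) - B * b / 2 - s * c - l * \<bar>c\<bar>) else 0) \<partial>lborel)
    = ennreal (if b > 0 then G * b powr k * exp (- B * b / 2) * (sqrt (2 * pi * (b / A)) * (exp ((b / A) * (s + l)\<^sup>2 / 2) * Phi (- (s + l) * sqrt (b / A))
                    + exp ((b / A) * (s - l)\<^sup>2 / 2) * Phi ((s - l) * sqrt (b / A)))) else 0)"
proof (cases "b > 0")
  case False then show ?thesis by simp
next
  case True
  have v: "b / A > 0" using True A by simp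
  have "(\<integral>\<^sup>+c. ennreal (if b > 0 then G * b powr k * exp (- c\<^sup>2 / (2 * (b / A)) - B * b / 2 - s * c - l * \<bar>c\<bar>) else 0) \<partial>lborel)
     = (\<integral>\<^sup>+c. ennreal (G * b powr k * exp (- B * b / 2)) * ennreal (exp (- c\<^sup>2 / (2 * (b / A)) - s * c - l * \<bar>c\<bar>)) \<partial>lborel)"
  proof (intro nn_integral_cong)
    fix c :: real
    have "exp (- c\<^sup>2 / (2 * (b / A)) - B * b / 2 - s * c - l * \<bar>c\<bar>) = exp (- B * b / 2) * exp (- c\<^sup>2 / (2 * (b / A)) - s * c - l * \<bar>c\<bar>)"
      unfolding exp_add[symmetric] by (simp add: algebra_simps)
    then show "ennreal (if b > 0 then G * b powr k * exp (- c\<^sup>2 / (2 * (b / A)) - B * b / 2 - s * c - l * \<bar>c\<bar>) else 0)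
      = ennreal (G * b powr k * exp (- B * b / 2)) * ennreal (exp (- c\<^sup>2 / (2 * (b / A)) - s * c - l * \<bar>c\<bar>))"
      using True G by (simp add: ennreal_mult[symmetric] mult_ac)
  qed
  also have "\<dots> = ennreal (G * b powr k * exp (- B * b / 2)) * ennreal (sqrt (2 * pi * (b / A)) * (exp ((b / A) * (s + l)\<^sup>2 / 2) * Phi (- (s + l) * sqrt (b / A))
                    + exp ((b / A) * (s - l)\<^sup>2 / 2) * Phi ((s - l) * sqrt (b / A))))"
    apply (subst nn_integral_cmult)
    subgoal by measurable
    subgoal by (simp only: cint[OF v])
    done
  also have "\<dots> = ennreal (G * b powr k * exp (- B * b / 2) * (sqrt (2 * pi * (b / A)) * (exp ((b / A) * (s + l)\<^sup>2 / 2) * Phi (- (s + l) * sqrt (b / A))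
                    + exp ((b / A) * (s - l)\<^sup>2 / 2) * Phi ((s - l) * sqrt (b / A)))))"
  proof (rule ennreal_mult[symmetric])
    show "0 \<le> G * b powr k * exp (- B * b / 2)" using G by simp
    show "0 \<le> sqrt (2 * pi * (b / A)) * (exp ((b / A) * (s + l)\<^sup>2 / 2) * Phi (- (s + l) * sqrt (b / A))
                    + exp ((b / A) * (s - l)\<^sup>2 / 2) * Phi ((s - l) * sqrt (b / A)))"
      using True A by (intro mult_nonneg_nonneg add_nonneg_nonneg) (simp_all add: Phi_nonneg)
  qed
  finally show ?thesis using True by simp
qed

lemma step_b_pt:
  assumes A: "A > 0" and t: "t > 0"
  shows "G * (A * t) powr k * exp (- B * (A * t) / 2) * (sqrt (2 * pi * ((A * t) / A)) * (exp (((A * t) / A) * p\<^sup>2 / 2) * Phi (- p * sqrt ((A * t) / A))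
                    + exp (((A * t) / A) * q\<^sup>2 / 2) * Phi (q * sqrt ((A * t) / A))))
       = (G * A powr k * sqrt (2 * pi)) * (t powr (k + 1/2) * (exp (- (A * B - p\<^sup>2) * t / 2) * Phi (- p * sqrt t) + exp (- (A * B - q\<^sup>2) * t / 2) * Phi (q * sqrt t)))"
proof -
  have At: "(A * t) / A = t" using A by simp
  have pk: "(A * t) powr k = A powr k * t powr k" using A t by (simp add: powr_mult)
  have sq: "sqrt (2 * pi * t) = sqrt (2 * pi) * t powr (1/2)" using t by (simp add: real_sqrt_mult powr_half_sqrt)
  have tk: "t powr (k + 1/2) = t powr k * t powr (1/2)" using t by (simp add: powr_add)
  have e1: "exp (- B * (A * t) / 2) * exp (t * p\<^sup>2 / 2) = exp (- (A * B - p\<^sup>2) * t / 2)"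
    unfolding exp_add[symmetric] by (simp add: algebra_simps)
  have e2: "exp (- B * (A * t) / 2) * exp (t * q\<^sup>2 / 2) = exp (- (A * B - q\<^sup>2) * t / 2)"
    unfolding exp_add[symmetric] by (simp add: algebra_simps)
  show ?thesis
    unfolding At pk sq tk e1[symmetric] e2[symmetric] by (simp add: algebra_simps)
qed

lemma step_b:
  assumes A: "A > 0" and G: "G \<ge> 0"
  shows "(\<integral>\<^sup>+b. ennreal (if b > 0 then G * b powr k * exp (- B * b / 2) * (sqrt (2 * pi * (b / A)) * (exp ((b / A) * p\<^sup>2 / 2) * Phi (- p * sqrt (b / A))
                    + exp ((b / A) * q\<^sup>2 / 2) * Phi (q * sqrt (b / A)))) else 0) \<partial>lborel)
     = ennreal (A * (G * A powr k * sqrt (2 * pi))) * (\<integral>\<^sup>+t. ennreal (indicator {0<..} t * (t powr (k + 1/2) * (exp (- (A * B - p\<^sup>2) * t / 2) * Phi (- p * sqrt t) + exp (- (A * B - q\<^sup>2) * t / 2) * Phi (q * sqrt t)))) \<partial>lborel)"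
proof -
  let ?f = "\<lambda>b. ennreal (if b > 0 then G * b powr k * exp (- B * b / 2) * (sqrt (2 * pi * (b / A)) * (exp ((b / A) * p\<^sup>2 / 2) * Phi (- p * sqrt (b / A))
                    + exp ((b / A) * q\<^sup>2 / 2) * Phi (q * sqrt (b / A)))) else 0)"
  let ?g = "\<lambda>t. ennreal (indicator {0<..} t * (t powr (k + 1/2) * (exp (- (A * B - p\<^sup>2) * t / 2) * Phi (- p * sqrt t) + exp (- (A * B - q\<^sup>2) * t / 2) * Phi (q * sqrt t))))"
  let ?C = "G * A powr k * sqrt (2 * pi)"
  have "integral\<^sup>N lborel ?f = ennreal \<bar>A\<bar> * (\<integral>\<^sup>+t. ?f (0 + A * t) \<partial>lborel)"
    apply (rule nn_integral_real_affine)
    subgoal by measurable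
    subgoal using A by simp
    done
  also have "(\<integral>\<^sup>+t. ?f (0 + A * t) \<partial>lborel) = (\<integral>\<^sup>+t. ennreal ?C * ?g t \<partial>lborel)"
  proof (intro nn_integral_cong)
    fix t :: real
    show "?f (0 + A * t) = ennreal ?C * ?g t"
    proof (cases "t > 0")
      case True
      have pos: "A * t > 0" using A True by simp
      have "?f (0 + A * t) = ennreal (G * (A * t) powr k * exp (- B * (A * t) / 2) * (sqrt (2 * pi * ((A * t) / A)) * (exp (((A * t) / A) * p\<^sup>2 / 2) * Phi (- p * sqrt ((A * t) / A))
                    + exp (((A * t) / A) * q\<^sup>2 / 2) * Phi (q * sqrt ((A * t) / A)))))"
        by (simp only: add_0_left if_P[OF pos])
      also have "\<dots> = ennreal (?C * (t powr (k + 1/2) * (exp (- (A * B - p\<^sup>2) * t / 2) * Phi (- p * sqrt t) + exp (- (A * B - q\<^sup>2) * t / 2) * Phi (q * sqrt t))))"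
        by (simp only: step_b_pt[OF A True])
      also have "\<dots> = ennreal ?C * ?g t"
        using True G by (simp only: indicator_simps greaterThan_iff mult_1_left, intro ennreal_mult) (auto intro!: mult_nonneg_nonneg add_nonneg_nonneg Phi_nonneg)
      finally show ?thesis .
    next
      case False
      then have "\<not> A * t > 0" using A by (simp add: zero_less_mult_iff)
      then show ?thesis using False by simp
    qed
  qed
  also have "\<dots> = ennreal ?C * integral\<^sup>N lborel ?g"
    by (rule nn_integral_cmult) measurable
  finally have "integral\<^sup>N lborel ?f = ennreal A * (ennreal ?C * integral\<^sup>N lborel ?g)" using A by simp
  also have "\<dots> = ennreal (A * ?C) * integral\<^sup>N lborel ?g"
    using A G by (simp add: ennreal_mult mult.assoc)
  finally show ?thesis .
qed

lemma main3:
  assumes A: "A > 0" and k: "k > -1"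
  shows "(\<integral>\<^sup>+w. ennreal (Hf k A B s l w) \<partial>lborel)
     = ennreal (Gamma (k + 1) * 2 powr (k + 1) * sqrt (2 * pi)) * (\<integral>\<^sup>+t. ennreal (indicator {0<..} t * (t powr (k + 1/2) * (exp (- (A * B - (s + l)\<^sup>2) * t / 2) * Phi (- (s + l) * sqrt t) + exp (- (A * B - (s - l)\<^sup>2) * t / 2) * Phi ((s - l) * sqrt t)))) \<partial>lborel)"
proof -
  define G where "G = Gamma (k + 1) / (A / 2) powr (k + 1)"
  have G0: "G \<ge> 0" unfolding G_def using k by (auto intro!: divide_nonneg_nonneg less_imp_le Gamma_real_pos)
  have "(\<integral>\<^sup>+w. ennreal (Hf k A B s l w) \<partial>lborel)
    = (\<integral>\<^sup>+b. \<integral>\<^sup>+c. ennreal (if b > 0 then G * b powr k * exp (- c\<^sup>2 / (2 * (b / A)) - B * b / 2 - s * c - l * \<bar>c\<bar>) else 0) \<partial>lborel \<partial>lborel)"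
    by (rule step_ab[OF A k G_def])
  also have "\<dots> = (\<integral>\<^sup>+b. ennreal (if b > 0 then G * b powr k * exp (- B * b / 2) * (sqrt (2 * pi * (b / A)) * (exp ((b / A) * (s + l)\<^sup>2 / 2) * Phi (- (s + l) * sqrt (b / A))
                    + exp ((b / A) * (s - l)\<^sup>2 / 2) * Phi ((s - l) * sqrt (b / A)))) else 0) \<partial>lborel)"
    by (intro nn_integral_cong step_c[OF A G0])
  also have "\<dots> = ennreal (A * (G * A powr k * sqrt (2 * pi))) * (\<integral>\<^sup>+t. ennreal (indicator {0<..} t * (t powr (k + 1/2) * (exp (- (A * B - (s + l)\<^sup>2) * t / 2) * Phi (- (s + l) * sqrt t) + exp (- (A * B - (s - l)\<^sup>2) * t / 2) * Phi ((s - l) * sqrt t)))) \<partial>lborel)"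
    by (rule step_b[OF A G0])
  also have "A * (G * A powr k * sqrt (2 * pi)) = Gamma (k + 1) * 2 powr (k + 1) * sqrt (2 * pi)"
  proof -
    have "(A / 2) powr (k + 1) = A powr k * A / 2 powr (k + 1)"
      using A by (simp add: powr_divide powr_add)
    moreover have "A powr k > 0" using A by simp
    moreover have "2 powr (k + 1) > (0::real)" by simp
    ultimately show ?thesis unfolding G_def using A by (simp add: field_simps)
  qed
  finally show ?thesis .
qed

lemma Phi_neg_nn: "ennreal (Phi (- x)) = (\<integral>\<^sup>+ z. ennreal (indicator {x..} z * std_normal_density z) \<partial>lborel)"
proof -
  let ?f = "\<lambda>z. ennreal (indicator {..- x} z * std_normal_density z)"
  have "ennreal (Phi (- x)) = integral\<^sup>N lborel ?f" by (rule Phi_nn)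
  also have "\<dots> = ennreal \<bar>-1\<bar> * (\<integral>\<^sup>+z. ?f (0 + - 1 * z) \<partial>lborel)"
    apply (rule nn_integral_real_affine)
    subgoal by measurable
    subgoal by simp
    done
  also have "(\<integral>\<^sup>+z. ?f (0 + - 1 * z) \<partial>lborel) = (\<integral>\<^sup>+ z. ennreal (indicator {x..} z * std_normal_density z) \<partial>lborel)"
    by (intro nn_integral_cong) (simp add: indicator_def std_normal_density_def)
  finally show ?thesis by simp
qed

lemma abs_moment3: "(\<integral>\<^sup>+ z. ennreal (std_normal_density z * \<bar>z\<bar> ^ 3) \<partial>lborel) = ennreal (2 * sqrt (2 / pi))"
proof -
  have h: "has_bochner_integral lborel (\<lambda>x. std_normal_density x * \<bar>x\<bar>^(2 * 1 + 1)) (sqrt (2/pi) * 2^1 * fact 1)"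
    by (rule std_normal_moment_abs_odd)
  then have i: "integrable lborel (\<lambda>x. std_normal_density x * \<bar>x\<bar>^3)" by (auto simp: integrable.simps)
  have v: "integral\<^sup>L lborel (\<lambda>x. std_normal_density x * \<bar>x\<bar>^3) = 2 * sqrt (2 / pi)"
    using has_bochner_integral_integral_eq[OF h] by simp
  show ?thesis using nn_integral_eq_integral[OF i] v by simp
qed

lemma powr_int_0:
  assumes X: "X \<ge> 0"
  shows "(\<integral>\<^sup>+ t. ennreal (indicator {0..X} t * t powr (1/2)) \<partial>lborel) = ennreal (X powr (3/2) / (3/2))"
proof -
  have "((\<lambda>x. x powr (1/2)) has_integral (X powr (1/2 + 1) / (1/2 + 1))) {0..X}"
    by (rule has_integral_powr_from_0) (use X in auto)
  from nn_integral_has_integral_lebesgue[OF _ this]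
  show ?thesis by simp
qed

lemma sq_powr_32: "y \<ge> 0 \<Longrightarrow> (y\<^sup>2) powr (3/2) = (y::real) ^ 3"
proof (cases "y = 0")
  case False
  assume "y \<ge> 0" then have y: "y > 0" using False by simp
  have "(y\<^sup>2) powr (3/2) = (y powr 2) powr (3/2)" using y by (simp add: powr_realpow)
  also have "\<dots> = y powr 3" by (simp add: powr_powr)
  also have "\<dots> = y ^ 3" using y by (simp add: powr_realpow)
  finally show ?thesis .
qed simp

lemma Kint_pt:
  assumes l: "l > 0"
  shows "ennreal (indicator {0<..} t * (t powr (1/2) * (Phi (- l * sqrt t) + Phi (- l * sqrt t))))
     = (\<integral>\<^sup>+ z. ennreal (indicator {0<..} t * t powr (1/2) * (if l * sqrt t \<le> \<bar>z\<bar> then 1 else 0) * std_normal_density z) \<partial>lborel)"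
proof (cases "t > 0")
  case False then show ?thesis by simp
next
  case True
  have "(\<integral>\<^sup>+ z. ennreal (indicator {0<..} t * t powr (1/2) * (if l * sqrt t \<le> \<bar>z\<bar> then 1 else 0) * std_normal_density z) \<partial>lborel)
      = (\<integral>\<^sup>+ z. ennreal (t powr (1/2)) * (ennreal (indicator {..- (l * sqrt t)} z * std_normal_density z) + ennreal (indicator {l * sqrt t..} z * std_normal_density z)) \<partial>lborel)"
  proof (intro nn_integral_cong)
    fix z :: real
    have ls: "l * sqrt t > 0" using l True by simp
    have e: "ennreal (a * b) = ennreal a * ennreal b" if "a \<ge> 0" "b \<ge> 0" for a b :: real
      using that by (rule ennreal_mult)
    have tp: "indicator {0<..} t = (1::real)" using True by simp
    show "ennreal (indicator {0<..} t * t powr (1/2) * (if l * sqrt t \<le> \<bar>z\<bar> then 1 else 0) * std_normal_density z)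
      = ennreal (t powr (1/2)) * (ennreal (indicator {..- (l * sqrt t)} z * std_normal_density z) + ennreal (indicator {l * sqrt t..} z * std_normal_density z))"
    proof (cases "z \<ge> 0")
      case z: True
      have i1: "indicator {..- (l * sqrt t)} z = (0::real)" using z ls by (simp add: indicator_def)
      have i2: "indicator {l * sqrt t..} z = (if l * sqrt t \<le> \<bar>z\<bar> then 1 else 0 :: real)" using z by (simp add: indicator_def)
      show ?thesis unfolding i1 i2 tp
        by (simp del: ennreal_1 add: e[symmetric] mult.assoc)
    next
      case z: False
      have i1: "indicator {..- (l * sqrt t)} z = (if l * sqrt t \<le> \<bar>z\<bar> then 1 else 0 :: real)" using z by (simp add: indicator_def)
      have i2: "indicator {l * sqrt t..} z = (0::real)" using z ls by (simp add: indicator_def)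
      show ?thesis unfolding i1 i2 tp
        by (simp del: ennreal_1 add: e[symmetric] mult.assoc)
    qed
  qed
  also have "\<dots> = ennreal (t powr (1/2)) * ((\<integral>\<^sup>+ z. ennreal (indicator {..- (l * sqrt t)} z * std_normal_density z) \<partial>lborel) + (\<integral>\<^sup>+ z. ennreal (indicator {l * sqrt t..} z * std_normal_density z) \<partial>lborel))"
  proof -
    have "(\<integral>\<^sup>+ z. ennreal (t powr (1/2)) * (ennreal (indicator {..- (l * sqrt t)} z * std_normal_density z) + ennreal (indicator {l * sqrt t..} z * std_normal_density z)) \<partial>lborel)
      = ennreal (t powr (1/2)) * (\<integral>\<^sup>+ z. (ennreal (indicator {..- (l * sqrt t)} z * std_normal_density z) + ennreal (indicator {l * sqrt t..} z * std_normal_density z)) \<partial>lborel)"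
      by (rule nn_integral_cmult) measurable
    also have "(\<integral>\<^sup>+ z. (ennreal (indicator {..- (l * sqrt t)} z * std_normal_density z) + ennreal (indicator {l * sqrt t..} z * std_normal_density z)) \<partial>lborel)
      = (\<integral>\<^sup>+ z. ennreal (indicator {..- (l * sqrt t)} z * std_normal_density z) \<partial>lborel) + (\<integral>\<^sup>+ z. ennreal (indicator {l * sqrt t..} z * std_normal_density z) \<partial>lborel)"
      by (rule nn_integral_add) measurable
    finally show ?thesis .
  qed
  also have "\<dots> = ennreal (t powr (1/2)) * (ennreal (Phi (- (l * sqrt t))) + ennreal (Phi (- (l * sqrt t))))"
    using Phi_nn[of "- (l * sqrt t)", symmetric] Phi_neg_nn[of "l * sqrt t", symmetric] by (simp only:)
  also have "\<dots> = ennreal (indicator {0<..} t * (t powr (1/2) * (Phi (- l * sqrt t) + Phi (- l * sqrt t))))"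
  proof -
    have "ennreal (Phi (- (l * sqrt t))) + ennreal (Phi (- (l * sqrt t))) = ennreal (Phi (- (l * sqrt t)) + Phi (- (l * sqrt t)))"
      by (rule ennreal_plus[symmetric]) (simp_all add: Phi_nonneg)
    moreover have "ennreal (t powr (1/2)) * ennreal (Phi (- (l * sqrt t)) + Phi (- (l * sqrt t))) = ennreal (t powr (1/2) * (Phi (- (l * sqrt t)) + Phi (- (l * sqrt t))))"
      by (rule ennreal_mult[symmetric]) (simp_all add: Phi_nonneg)
    ultimately show ?thesis using True by simp
  qed
  finally show ?thesis by simp
qed

lemma Kint_inner:
  assumes l: "l > 0"
  shows "(\<integral>\<^sup>+ t. ennreal (indicator {0<..} t * t powr (1/2) * (if l * sqrt t \<le> \<bar>z\<bar> then 1 else 0) * std_normal_density z) \<partial>lborel)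
    = ennreal (std_normal_density z * \<bar>z\<bar> ^ 3 * (2 / (3 * l ^ 3)))"
proof -
  define y where "y = \<bar>z\<bar> / l"
  have y0: "y \<ge> 0" using l by (simp add: y_def)
  have "(\<integral>\<^sup>+ t. ennreal (indicator {0<..} t * t powr (1/2) * (if l * sqrt t \<le> \<bar>z\<bar> then 1 else 0) * std_normal_density z) \<partial>lborel)
     = (\<integral>\<^sup>+ t. ennreal (std_normal_density z) * ennreal (indicator {0..y\<^sup>2} t * t powr (1/2)) \<partial>lborel)"
  proof (intro nn_integral_cong)
    fix t :: real
    have c: "(l * sqrt t \<le> \<bar>z\<bar>) = (t \<le> y\<^sup>2)" if t: "t \<ge> 0"
    proof -
      have "(l * sqrt t \<le> \<bar>z\<bar>) = (sqrt t \<le> y)" using l by (simp add: y_def field_simps)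
      also have "\<dots> = (sqrt t \<le> sqrt (y\<^sup>2))" using y0 by simp
      also have "\<dots> = (t \<le> y\<^sup>2)" by (rule real_sqrt_le_iff)
      finally show ?thesis .
    qed
    show "ennreal (indicator {0<..} t * t powr (1/2) * (if l * sqrt t \<le> \<bar>z\<bar> then 1 else 0) * std_normal_density z)
      = ennreal (std_normal_density z) * ennreal (indicator {0..y\<^sup>2} t * t powr (1/2))"
    proof (cases "t > 0")
      case True
      then show ?thesis using c[OF less_imp_le[OF True]] by (simp add: indicator_def ennreal_mult[symmetric] mult_ac)
    next
      case False
      then show ?thesis by (cases "t = 0") (simp_all add: indicator_def)
    qed
  qed
  also have "\<dots> = ennreal (std_normal_density z) * ennreal ((y\<^sup>2) powr (3/2) / (3/2))"
    by (subst nn_integral_cmult) (measurable, simp add: powr_int_0)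
  also have "\<dots> = ennreal (std_normal_density z * \<bar>z\<bar> ^ 3 * (2 / (3 * l ^ 3)))"
  proof -
    have "(y\<^sup>2) powr (3/2) / (3/2) = \<bar>z\<bar> ^ 3 * (2 / (3 * l ^ 3))"
      using sq_powr_32[OF y0] by (simp add: y_def power_divide)
    then have "ennreal (std_normal_density z) * ennreal ((y\<^sup>2) powr (3/2) / (3/2)) = ennreal (std_normal_density z) * ennreal (\<bar>z\<bar> ^ 3 * (2 / (3 * l ^ 3)))"
      by (simp only:)
    also have "\<dots> = ennreal (std_normal_density z * (\<bar>z\<bar> ^ 3 * (2 / (3 * l ^ 3))))"
      by (rule ennreal_mult[symmetric]) (use l in auto)
    finally show ?thesis by (simp only: mult.assoc)
  qed
  finally show ?thesis .
qed

lemma Kint: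
  assumes l: "l > 0"
  shows "(\<integral>\<^sup>+t. ennreal (indicator {0<..} t * (t powr (1/2) * (Phi (- l * sqrt t) + Phi (- l * sqrt t)))) \<partial>lborel)
    = ennreal (4 * sqrt (2 / pi) / (3 * l ^ 3))"
proof -
  have "(\<integral>\<^sup>+t. ennreal (indicator {0<..} t * (t powr (1/2) * (Phi (- l * sqrt t) + Phi (- l * sqrt t)))) \<partial>lborel)
    = (\<integral>\<^sup>+t. \<integral>\<^sup>+ z. ennreal (indicator {0<..} t * t powr (1/2) * (if l * sqrt t \<le> \<bar>z\<bar> then 1 else 0) * std_normal_density z) \<partial>lborel \<partial>lborel)"
    by (intro nn_integral_cong Kint_pt[OF l])
  also have "\<dots> = (\<integral>\<^sup>+z. \<integral>\<^sup>+ t. ennreal (indicator {0<..} t * t powr (1/2) * (if l * sqrt t \<le> \<bar>z\<bar> then 1 else 0) * std_normal_density z) \<partial>lborel \<partial>lborel)"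
  proof (rule lborel_pair.Fubini')
    show "(\<lambda>(z, t). ennreal (indicator {0<..} t * t powr (1/2) * (if l * sqrt t \<le> \<bar>z\<bar> then 1 else 0) * std_normal_density z)) \<in> borel_measurable (lborel \<Otimes>\<^sub>M lborel)"
      by measurable
  qed
  also have "\<dots> = (\<integral>\<^sup>+z. ennreal (std_normal_density z * \<bar>z\<bar> ^ 3) * ennreal (2 / (3 * l ^ 3)) \<partial>lborel)"
    using l by (intro nn_integral_cong) (simp add: Kint_inner ennreal_mult[symmetric])
  also have "\<dots> = ennreal (2 * sqrt (2 / pi)) * ennreal (2 / (3 * l ^ 3))"
    by (subst nn_integral_multc) (measurable, simp add: abs_moment3)
  also have "\<dots> = ennreal (4 * sqrt (2 / pi) / (3 * l ^ 3))"
    using l by (simp add: ennreal_mult[symmetric])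
  finally show ?thesis .
qed

lemma Hf_nonneg: "Hf k A B s l w \<ge> 0"
  by (simp add: Hf_def)

lemma Hf_meas_lborel[measurable]: "(\<lambda>w. Hf k A B s l w) \<in> borel_measurable (lborel :: (real \<times> real \<times> real) measure)"
proof -
  have "(\<lambda>w. Hf k A B s l w) \<in> borel_measurable (lborel \<Otimes>\<^sub>M (lborel \<Otimes>\<^sub>M lborel))"
    unfolding Hf_alt2 by measurable
  then show ?thesis by (simp only: lborel_prod)
qed

lemma LINT_Hf: "(LINT w|lborel. Hf k A B s l w) = enn2real (\<integral>\<^sup>+w. ennreal (Hf k A B s l w) \<partial>lborel)"
  by (rule integral_eq_nn_integral) (simp_all add: Hf_nonneg)

lemma unnorm_Hf: "bgl_unnorm lam a c b = (lam / 2) ^ 3 * Hf 0 lam lam 0 lam (a, c, b)"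
proof (cases "pos_def2 a c b")
  case True
  then have "a * b - c\<^sup>2 > 0" by (simp add: pos_def2_iff)
  then have "(a * b - c\<^sup>2) powr 0 = 1" by simp
  moreover have "exp (- lam * \<bar>c\<bar>) * exp (- lam * a / 2) * exp (- lam * b / 2) = exp (- (lam * a + lam * b) / 2 - 0 * c - lam * \<bar>c\<bar>)"
    unfolding exp_add[symmetric] by (simp add: algebra_simps)
  ultimately show ?thesis using True unfolding bgl_unnorm_def Hf_def
    by (simp add: power3_eq_cube mult_ac)
next
  case False
  then show ?thesis by (simp add: bgl_unnorm_def Hf_def)
qed

lemma C_BGL_val:
  assumes l: "lam > 0"
  shows "C_BGL lam = 2 / 3"
proof -
  have "C_BGL lam = (LINT w|lborel. (lam / 2) ^ 3 * Hf 0 lam lam 0 lam w)"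
    unfolding C_BGL_def by (intro Bochner_Integration.integral_cong refl) (auto simp: unnorm_Hf split: prod.splits)
  also have "\<dots> = (lam / 2) ^ 3 * enn2real (\<integral>\<^sup>+w. ennreal (Hf 0 lam lam 0 lam w) \<partial>lborel)"
    by (simp add: LINT_Hf)
  also have "(\<integral>\<^sup>+w. ennreal (Hf 0 lam lam 0 lam w) \<partial>lborel)
     = ennreal (Gamma (0 + 1) * 2 powr (0 + 1) * sqrt (2 * pi)) * (\<integral>\<^sup>+t. ennreal (indicator {0<..} t * (t powr (0 + 1/2) * (exp (- (lam * lam - (0 + lam)\<^sup>2) * t / 2) * Phi (- (0 + lam) * sqrt t) + exp (- (lam * lam - (0 - lam)\<^sup>2) * t / 2) * Phi ((0 - lam) * sqrt t)))) \<partial>lborel)"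
    by (rule main3[OF l]) simp
  also have "(\<integral>\<^sup>+t. ennreal (indicator {0<..} t * (t powr (0 + 1/2) * (exp (- (lam * lam - (0 + lam)\<^sup>2) * t / 2) * Phi (- (0 + lam) * sqrt t) + exp (- (lam * lam - (0 - lam)\<^sup>2) * t / 2) * Phi ((0 - lam) * sqrt t)))) \<partial>lborel)
     = (\<integral>\<^sup>+t. ennreal (indicator {0<..} t * (t powr (1/2) * (Phi (- lam * sqrt t) + Phi (- lam * sqrt t)))) \<partial>lborel)"
    by (intro nn_integral_cong) (simp add: power2_eq_square)
  also have "\<dots> = ennreal (4 * sqrt (2 / pi) / (3 * lam ^ 3))"
    by (rule Kint[OF l])
  finally have "C_BGL lam = (lam / 2) ^ 3 * enn2real (ennreal (2 * sqrt (2 * pi)) * ennreal (4 * sqrt (2 / pi) / (3 * lam ^ 3)))"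
    by simp
  also have "\<dots> = (lam / 2) ^ 3 * (2 * sqrt (2 * pi) * (4 * sqrt (2 / pi) / (3 * lam ^ 3)))"
    using l by (simp add: enn2real_mult)
  also have "\<dots> = sqrt (2 * pi) * sqrt (2 / pi) / 3"
    using l by (simp add: field_simps power3_eq_cube)
  also have "sqrt (2 * pi) * sqrt (2 / pi) = 2"
  proof -
    have "sqrt (2 * pi) * sqrt (2 / pi) = sqrt ((2 * pi) * (2 / pi))" by (rule real_sqrt_mult[symmetric])
    also have "(2 * pi) * (2 / pi) = 2\<^sup>2" using pi_gt_zero by (simp add: field_simps power2_eq_square)
    finally show ?thesis by simp
  qed
  finally show ?thesis by simp
qed

lemma inner_g:
  assumes x: "(x::real) > 0"
  shows "ennreal (LINT u:{x..}|lborel. u powr (-1/2) * exp (- u))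
       = (\<integral>\<^sup>+u. ennreal (indicator {x..} u * (u powr (-1/2) * exp (- u))) \<partial>lborel)"
proof -
  let ?X = "(\<integral>\<^sup>+u. ennreal (indicator {x..} u * (u powr (-1/2) * exp (- u))) \<partial>lborel)"
  have "(LINT u:{x..}|lborel. u powr (-1/2) * exp (- u)) = enn2real ?X"
    unfolding set_lebesgue_integral_def
    by (subst integral_eq_nn_integral) (simp_all)
  moreover have "?X < top"
  proof -
    have "?X \<le> (\<integral>\<^sup>+u. ennreal (indicator {0<..} u * u powr (-1/2) * exp (- 1 * u)) \<partial>lborel)"
      using x by (intro nn_integral_mono) (auto simp: indicator_def)
    also have "\<dots> = ennreal (Gamma (-1/2 + 1) / 1 powr (-1/2 + 1))"
      by (rule gamma_rate) auto
    finally show ?thesis using ennreal_less_top le_less_trans by blast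
  qed
  ultimately show ?thesis by simp
qed

lemma g_meas[measurable]: "(\<lambda>x::real. LINT u:{x..}|lborel. u powr (-1/2) * exp (- u)) \<in> borel_measurable lborel"
proof -
  have e: "(\<lambda>x::real. LINT u:{x..}|lborel. u powr (-1/2) * exp (- u)) = (\<lambda>x. LINT u|lborel. (if x \<le> u then 1 else 0) * (u powr (-1/2) * exp (- u)))"
    unfolding set_lebesgue_integral_def by (simp add: indicator_def of_bool_def)
  show ?thesis unfolding e by measurable
qed

lemma g_meas_borel[measurable]: "(\<lambda>x::real. LINT u:{x..}|lborel. u powr (-1/2) * exp (- u)) \<in> borel_measurable borel"
proof -
  have e: "(\<lambda>x::real. LINT u:{x..}|lborel. u powr (-1/2) * exp (- u)) = (\<lambda>x. LINT u|lborel. (if x \<le> u then 1 else 0) * (u powr (-1/2) * exp (- u)))"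
    unfolding set_lebesgue_integral_def by (simp add: indicator_def of_bool_def)
  show ?thesis unfolding e by measurable
qed

lemma g_nonneg: "(LINT u:{x..}|lborel. u powr (-1/2) * exp (- u)) \<ge> (0::real)"
  unfolding set_lebesgue_integral_def by (intro integral_nonneg_AE) auto

lemma GF_inner:
  "(\<integral>\<^sup>+x. ennreal (indicator {0<..} x * x powr (1/2) * (indicator {x..} u * (u powr (-1/2) * exp (- u)))) \<partial>lborel)
   = ennreal (indicator {0<..} u * u powr 1 * exp (- 1 * u)) * ennreal (2/3)"
proof (cases "u > 0")
  case False
  have "(\<lambda>x. ennreal (indicator {0<..} x * x powr (1/2) * (indicator {x..} u * (u powr (-1/2) * exp (- u))))) = (\<lambda>x. 0)"
    by (rule ext) (use False in \<open>auto simp: indicator_def\<close>)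
  then show ?thesis using False by (simp only:) simp
next
  case True
  have "(\<integral>\<^sup>+x. ennreal (indicator {0<..} x * x powr (1/2) * (indicator {x..} u * (u powr (-1/2) * exp (- u)))) \<partial>lborel)
     = (\<integral>\<^sup>+x. ennreal (u powr (-1/2) * exp (- u)) * ennreal (indicator {0..u} x * x powr (1/2)) \<partial>lborel)"
  proof (intro nn_integral_cong)
    fix x :: real
    show "ennreal (indicator {0<..} x * x powr (1/2) * (indicator {x..} u * (u powr (-1/2) * exp (- u))))
       = ennreal (u powr (-1/2) * exp (- u)) * ennreal (indicator {0..u} x * x powr (1/2))"
    proof (cases "x > 0")
      case True then show ?thesis by (simp add: indicator_def ennreal_mult[symmetric] mult_ac)
    next
      case False then show ?thesis by (cases "x = 0") (simp_all add: indicator_def)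
    qed
  qed
  also have "\<dots> = ennreal (u powr (-1/2) * exp (- u)) * ennreal (u powr (3/2) / (3/2))"
    by (subst nn_integral_cmult) (measurable, use True in \<open>simp add: powr_int_0\<close>)
  also have "\<dots> = ennreal (u powr (-1/2) * exp (- u) * (u powr (3/2) / (3/2)))"
    by (rule ennreal_mult[symmetric]) auto
  also have "u powr (-1/2) * exp (- u) * (u powr (3/2) / (3/2)) = (indicator {0<..} u * u powr 1 * exp (- 1 * u)) * (2/3)"
  proof -
    have "u powr (-1/2) * u powr (3/2) = u powr 1" using True by (simp add: powr_add[symmetric])
    then show ?thesis using True by (simp add: field_simps)
  qed
  also have "ennreal (indicator {0<..} u * u powr 1 * exp (- 1 * u) * (2/3)) = ennreal (indicator {0<..} u * u powr 1 * exp (- 1 * u)) * ennreal (2/3)"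
    by (rule ennreal_mult) auto
  finally show ?thesis .
qed

lemma GF_val: "(LINT x:{0<..}|lborel. x powr (1/2) * (LINT u:{x..}|lborel. u powr (-1/2) * exp (- u))) = (2/3::real)"
proof -
  let ?g = "\<lambda>x::real. LINT u:{x..}|lborel. u powr (-1/2) * exp (- u)"
  let ?F = "\<lambda>x u::real. ennreal (indicator {0<..} x * x powr (1/2) * (indicator {x..} u * (u powr (-1/2) * exp (- u))))"
  have m: "(\<lambda>x. indicator {0<..} x *\<^sub>R (x powr (1/2) * ?g x)) \<in> borel_measurable lborel"
    by measurable
  have "(LINT x:{0<..}|lborel. x powr (1/2) * ?g x) = enn2real (\<integral>\<^sup>+x. ennreal (indicator {0<..} x *\<^sub>R (x powr (1/2) * ?g x)) \<partial>lborel)"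
    unfolding set_lebesgue_integral_def[of lborel "{0<..}::real set"]
    apply (rule integral_eq_nn_integral[OF m])
    apply (rule AE_I2)
    subgoal for x using g_nonneg[of x] by (auto intro!: mult_nonneg_nonneg)
    done
  also have "(\<integral>\<^sup>+x. ennreal (indicator {0<..} x *\<^sub>R (x powr (1/2) * ?g x)) \<partial>lborel) = (\<integral>\<^sup>+x. \<integral>\<^sup>+u. ?F x u \<partial>lborel \<partial>lborel)"
  proof (intro nn_integral_cong)
    fix x :: real
    show "ennreal (indicator {0<..} x *\<^sub>R (x powr (1/2) * ?g x)) = (\<integral>\<^sup>+u. ?F x u \<partial>lborel)"
    proof (cases "x > 0")
      case False then show ?thesis by (simp add: indicator_def)
    next
      case True
      have "ennreal (indicator {0<..} x *\<^sub>R (x powr (1/2) * ?g x)) = ennreal (x powr (1/2)) * ennreal (?g x)"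
        using True by (simp only: indicator_simps greaterThan_iff if_True scaleR_one) (rule ennreal_mult, simp, rule g_nonneg)
      also have "\<dots> = ennreal (x powr (1/2)) * (\<integral>\<^sup>+u. ennreal (indicator {x..} u * (u powr (-1/2) * exp (- u))) \<partial>lborel)"
        by (simp only: inner_g[OF True])
      also have "\<dots> = (\<integral>\<^sup>+u. ennreal (x powr (1/2)) * ennreal (indicator {x..} u * (u powr (-1/2) * exp (- u))) \<partial>lborel)"
        by (rule nn_integral_cmult[symmetric]) measurable
      also have "\<dots> = (\<integral>\<^sup>+u. ?F x u \<partial>lborel)"
        using True by (intro nn_integral_cong) (simp add: ennreal_mult[symmetric])
      finally show ?thesis .
    qed
  qed
  also have "\<dots> = (\<integral>\<^sup>+u. \<integral>\<^sup>+x. ?F x u \<partial>lborel \<partial>lborel)"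
  proof (rule lborel_pair.Fubini'[of "\<lambda>u x. ?F x u"])
    show "(\<lambda>(u, x). ?F x u) \<in> borel_measurable (lborel \<Otimes>\<^sub>M lborel)"
      unfolding indicator_def atLeast_iff greaterThan_iff by measurable
  qed
  also have "\<dots> = (\<integral>\<^sup>+u. ennreal (indicator {0<..} u * u powr 1 * exp (- 1 * u)) * ennreal (2/3) \<partial>lborel)"
    by (intro nn_integral_cong GF_inner)
  also have "\<dots> = ennreal (Gamma (1 + 1) / 1 powr (1 + 1)) * ennreal (2/3)"
    by (subst nn_integral_multc) (measurable, subst gamma_rate, auto)
  also have "\<dots> = ennreal (2/3)"
    using Gamma_plus1[of "1::real"] by simp
  finally show ?thesis by simp
qed

lemma lik_unnorm:
  "lik n y a c b * bgl_unnorm lam a c b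
   = (2 * pi) powr (- real n) * (lam / 2) ^ 3 * Hf (real n / 2) (Smat n y 1 1 + lam) (Smat n y 2 2 + lam) (Smat n y 1 2) lam (a, c, b)"
proof (cases "pos_def2 a c b")
  case True
  have "exp (- (Smat n y 1 1 * a + 2 * Smat n y 1 2 * c + Smat n y 2 2 * b) / 2) * (exp (- lam * \<bar>c\<bar>) * exp (- lam * a / 2) * exp (- lam * b / 2))
      = exp (- ((Smat n y 1 1 + lam) * a + (Smat n y 2 2 + lam) * b) / 2 - Smat n y 1 2 * c - lam * \<bar>c\<bar>)"
    unfolding exp_add[symmetric] by (simp add: field_simps)
  then show ?thesis using True unfolding lik_def bgl_unnorm_def Hf_def
    by (simp add: power3_eq_cube mult_ac)
next
  case False
  then show ?thesis by (simp add: bgl_unnorm_def Hf_def)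
qed

lemma marg_lik_Hf:
  "marg_lik n y lam = (2 * pi) powr (- real n) * (lam / 2) ^ 3 / C_BGL lam *
     enn2real (\<integral>\<^sup>+w. ennreal (Hf (real n / 2) (Smat n y 1 1 + lam) (Smat n y 2 2 + lam) (Smat n y 1 2) lam w) \<partial>lborel)"
proof -
  have "marg_lik n y lam = (LINT w|lborel. (2 * pi) powr (- real n) * (lam / 2) ^ 3 / C_BGL lam * Hf (real n / 2) (Smat n y 1 1 + lam) (Smat n y 2 2 + lam) (Smat n y 1 2) lam w)"
    unfolding marg_lik_def
  proof (intro Bochner_Integration.integral_cong refl)
    fix w :: "real \<times> real \<times> real"
    obtain a c b where w: "w = (a, c, b)" by (cases w) auto
    have "lik n y a c b * bgl_prior lam a c b = (lik n y a c b * bgl_unnorm lam a c b) / C_BGL lam"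
      unfolding bgl_prior_def by simp
    also have "\<dots> = (2 * pi) powr (- real n) * (lam / 2) ^ 3 / C_BGL lam * Hf (real n / 2) (Smat n y 1 1 + lam) (Smat n y 2 2 + lam) (Smat n y 1 2) lam (a, c, b)"
      by (simp only: lik_unnorm) simp
    finally show "(case w of (w11, w12, w22) \<Rightarrow> lik n y w11 w12 w22 * bgl_prior lam w11 w12 w22) = (2 * pi) powr (- real n) * (lam / 2) ^ 3 / C_BGL lam * Hf (real n / 2) (Smat n y 1 1 + lam) (Smat n y 2 2 + lam) (Smat n y 1 2) lam w"
      unfolding w by simp
  qed
  also have "\<dots> = (2 * pi) powr (- real n) * (lam / 2) ^ 3 / C_BGL lam * (LINT w|lborel. Hf (real n / 2) (Smat n y 1 1 + lam) (Smat n y 2 2 + lam) (Smat n y 1 2) lam w)"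
    by (rule integral_mult_right_zero)
  finally show ?thesis by (simp only: LINT_Hf)
qed

lemma Smat_sq_nonneg: "Smat n y j j \<ge> 0"
  unfolding Smat_def by (intro sum_nonneg) simp

lemma Tid:
  assumes l: "lam > 0" and t: "t > 0" and D: "D = A * B - (lam - \<bar>s\<bar>)\<^sup>2"
  shows "exp (- D * t / 2) * (Phi (lam * t powr (1/2) * (\<bar>s\<bar> / lam - 1)) + exp (2 * lam * \<bar>s\<bar> * t) * Phi (- lam * t powr (1/2) * (\<bar>s\<bar> / lam + 1)))
   = exp (- (A * B - (s + lam)\<^sup>2) * t / 2) * Phi (- (s + lam) * sqrt t) + exp (- (A * B - (s - lam)\<^sup>2) * t / 2) * Phi ((s - lam) * sqrt t)"
proof -
  have tp: "t powr (1/2) = sqrt t" using t by (simp add: powr_half_sqrt)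
  show ?thesis
  proof (cases "s \<ge> 0")
    case True
    have a1: "lam * t powr (1/2) * (\<bar>s\<bar> / lam - 1) = (s - lam) * sqrt t"
      using True l unfolding tp by (simp add: field_simps)
    have a2: "- lam * t powr (1/2) * (\<bar>s\<bar> / lam + 1) = - (s + lam) * sqrt t"
      using True l unfolding tp by (simp add: field_simps)
    have e1: "exp (- D * t / 2) = exp (- (A * B - (s - lam)\<^sup>2) * t / 2)"
      using True unfolding D by (simp add: power2_commute)
    have e2: "exp (- D * t / 2) * exp (2 * lam * \<bar>s\<bar> * t) = exp (- (A * B - (s + lam)\<^sup>2) * t / 2)"
      using True unfolding D exp_add[symmetric] by (simp add: power2_eq_square field_simps)
    have "exp (- D * t / 2) * (Phi (lam * t powr (1/2) * (\<bar>s\<bar> / lam - 1)) + exp (2 * lam * \<bar>s\<bar> * t) * Phi (- lam * t powr (1/2) * (\<bar>s\<bar> / lam + 1)))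
      = exp (- D * t / 2) * Phi ((s - lam) * sqrt t) + (exp (- D * t / 2) * exp (2 * lam * \<bar>s\<bar> * t)) * Phi (- (s + lam) * sqrt t)"
      unfolding a1 a2 by (simp only: distrib_left mult.assoc)
    note this[unfolded e2]
    note this[unfolded e1]
    then show ?thesis unfolding e1 by (simp only: add.commute)
  next
    case False
    have a1: "lam * t powr (1/2) * (\<bar>s\<bar> / lam - 1) = - (s + lam) * sqrt t"
      using False l unfolding tp by (simp add: field_simps)
    have a2: "- lam * t powr (1/2) * (\<bar>s\<bar> / lam + 1) = (s - lam) * sqrt t"
      using False l unfolding tp by (simp add: field_simps)
    have e1: "exp (- D * t / 2) = exp (- (A * B - (s + lam)\<^sup>2) * t / 2)"
      using False unfolding D by (simp add: power2_eq_square algebra_simps)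
    have e2: "exp (- D * t / 2) * exp (2 * lam * \<bar>s\<bar> * t) = exp (- (A * B - (s - lam)\<^sup>2) * t / 2)"
      using False unfolding D exp_add[symmetric] by (simp add: power2_eq_square field_simps)
    have "exp (- D * t / 2) * (Phi (lam * t powr (1/2) * (\<bar>s\<bar> / lam - 1)) + exp (2 * lam * \<bar>s\<bar> * t) * Phi (- lam * t powr (1/2) * (\<bar>s\<bar> / lam + 1)))
      = exp (- D * t / 2) * Phi (- (s + lam) * sqrt t) + (exp (- D * t / 2) * exp (2 * lam * \<bar>s\<bar> * t)) * Phi ((s - lam) * sqrt t)"
      unfolding a1 a2 by (simp only: distrib_left mult.assoc)
    note this[unfolded e2]
    note this[unfolded e1]
    then show ?thesis unfolding e1 by (simp only:)
  qed
qed

lemma gexp: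
  assumes l: "lam > 0" and r: "r > 0" and a: "a = k + 3/2" and k: "k \<ge> 0"
    and D: "D = A * B - (lam - \<bar>s\<bar>)\<^sup>2" and rD: "r = D / 2"
    and F: "F = (\<lambda>t::real. Phi (lam * t powr (1/2) * (\<bar>s\<bar> / lam - 1)) + exp (2 * lam * \<bar>s\<bar> * t) * Phi (- lam * t powr (1/2) * (\<bar>s\<bar> / lam + 1)))"
  shows "gamma_expect a r F = r powr a / Gamma a * enn2real (\<integral>\<^sup>+t. ennreal (indicator {0<..} t * (t powr (k + 1/2) *
            (exp (- (A * B - (s + lam)\<^sup>2) * t / 2) * Phi (- (s + lam) * sqrt t) + exp (- (A * B - (s - lam)\<^sup>2) * t / 2) * Phi ((s - lam) * sqrt t)))) \<partial>lborel)"
proof -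
  have Ga: "Gamma a > 0" using a k by (intro Gamma_real_pos) simp
  have Fnn: "F t \<ge> 0" for t unfolding F by (intro add_nonneg_nonneg mult_nonneg_nonneg Phi_nonneg) simp_all
  have dnn: "gamma_dens a r t \<ge> 0" for t unfolding gamma_dens_def using Ga by simp
  have Fm: "F \<in> borel_measurable lborel" unfolding F by measurable
  have dm: "gamma_dens a r \<in> borel_measurable lborel" unfolding gamma_dens_def[abs_def] by measurable
  have "gamma_expect a r F = enn2real (\<integral>\<^sup>+t. ennreal (F t * gamma_dens a r t) \<partial>lborel)"
    unfolding gamma_expect_def
    by (rule integral_eq_nn_integral) (use Fm dm in measurable, use Fnn dnn in \<open>simp add: mult_nonneg_nonneg\<close>)
  also have "(\<integral>\<^sup>+t. ennreal (F t * gamma_dens a r t) \<partial>lborel)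
     = (\<integral>\<^sup>+t. ennreal (r powr a / Gamma a) * ennreal (indicator {0<..} t * (t powr (k + 1/2) *
            (exp (- (A * B - (s + lam)\<^sup>2) * t / 2) * Phi (- (s + lam) * sqrt t) + exp (- (A * B - (s - lam)\<^sup>2) * t / 2) * Phi ((s - lam) * sqrt t)))) \<partial>lborel)"
  proof (intro nn_integral_cong)
    fix t :: real
    show "ennreal (F t * gamma_dens a r t) = ennreal (r powr a / Gamma a) * ennreal (indicator {0<..} t * (t powr (k + 1/2) *
            (exp (- (A * B - (s + lam)\<^sup>2) * t / 2) * Phi (- (s + lam) * sqrt t) + exp (- (A * B - (s - lam)\<^sup>2) * t / 2) * Phi ((s - lam) * sqrt t))))"
    proof (cases "t > 0")
      case False then show ?thesis by (simp add: gamma_dens_def)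
    next
      case True
      have T: "exp (- D * t / 2) * F t = exp (- (A * B - (s + lam)\<^sup>2) * t / 2) * Phi (- (s + lam) * sqrt t) + exp (- (A * B - (s - lam)\<^sup>2) * t / 2) * Phi ((s - lam) * sqrt t)"
        unfolding F using Tid[OF l True D] by simp
      have a1: "a - 1 = k + 1/2" using a by simp
      have er: "exp (- r * t) = exp (- D * t / 2)" using rD by simp
      have "gamma_dens a r t = r powr a * t powr (k + 1/2) * exp (- D * t / 2) / Gamma a"
        unfolding gamma_dens_def by (simp only: if_P[OF True] a1 er)
      then have "F t * gamma_dens a r t = r powr a / Gamma a * (t powr (k + 1/2) * (exp (- D * t / 2) * F t))"
        by (simp add: mult_ac)
      then have "F t * gamma_dens a r t = r powr a / Gamma a * (indicator {0<..} t * (t powr (k + 1/2) *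
            (exp (- (A * B - (s + lam)\<^sup>2) * t / 2) * Phi (- (s + lam) * sqrt t) + exp (- (A * B - (s - lam)\<^sup>2) * t / 2) * Phi ((s - lam) * sqrt t))))"
        using True by (simp only: T) simp
      then show ?thesis using Ga True
        by (simp only:) (rule ennreal_mult, simp, intro mult_nonneg_nonneg add_nonneg_nonneg Phi_nonneg, simp_all)
    qed
  qed
  also have "\<dots> = ennreal (r powr a / Gamma a) * (\<integral>\<^sup>+t. ennreal (indicator {0<..} t * (t powr (k + 1/2) *
            (exp (- (A * B - (s + lam)\<^sup>2) * t / 2) * Phi (- (s + lam) * sqrt t) + exp (- (A * B - (s - lam)\<^sup>2) * t / 2) * Phi ((s - lam) * sqrt t)))) \<partial>lborel)"
    by (rule nn_integral_cmult) measurable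
  finally show ?thesis using Ga by (simp add: enn2real_mult)
qed

lemma const_eq:
  fixes x lam D G Ga :: real
  assumes D: "D > 0" and Ga: "Ga > 0"
  shows "(2 * pi) powr (- x) * (lam / 2) ^ 3 * (G * 2 powr (x / 2 + 1) * sqrt (2 * pi))
       = lam ^ 3 * G * Ga / (pi powr (x - 1/2) * D powr ((x + 3) / 2)) * ((D / 2) powr ((x + 3) / 2) / Ga)"
proof -
  have p2: "(2::real) powr (- x) * 2 powr (x / 2 + 1) * 2 powr (1/2) = 8 * 2 powr (- ((x + 3) / 2))"
  proof -
    have "(2::real) powr (- x) * 2 powr (x / 2 + 1) * 2 powr (1/2) = 2 powr (- x + (x / 2 + 1) + 1/2)"
      by (simp only: powr_add)
    also have "- x + (x / 2 + 1) + 1/2 = 3 + (- ((x + 3) / 2))" by (simp add: field_simps)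
    also have "(2::real) powr (3 + (- ((x + 3) / 2))) = 2 powr 3 * 2 powr (- ((x + 3) / 2))" by (simp only: powr_add)
    also have "(2::real) powr 3 = 8" by (simp add: powr_numeral)
    finally show ?thesis .
  qed
  have pp: "pi powr (- x) * pi powr (1/2) = 1 / pi powr (x - 1/2)"
  proof -
    have e: "- (x - 1/2) = - x + 1/2" by simp
    have "pi powr (- (x - 1/2)) = pi powr (- x) * pi powr (1/2)" by (simp only: e powr_add)
    moreover have "pi powr (- (x - 1/2)) = 1 / pi powr (x - 1/2)" by (rule powr_minus_divide)
    ultimately show ?thesis by simp
  qed
  have sq: "sqrt (2 * pi) = 2 powr (1/2) * pi powr (1/2)"
    by (simp add: powr_half_sqrt real_sqrt_mult)
  have m: "(2 * pi) powr (- x) = 2 powr (- x) * pi powr (- x)"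
    by (simp add: powr_mult)
  have dd: "(D / 2) powr ((x + 3) / 2) = D powr ((x + 3) / 2) * 2 powr (- ((x + 3) / 2))"
    using D by (simp add: powr_divide powr_minus_divide)
  have Dp: "D powr ((x + 3) / 2) > 0" using D by simp
  have "(2 * pi) powr (- x) * (lam / 2) ^ 3 * (G * 2 powr (x / 2 + 1) * sqrt (2 * pi))
     = lam ^ 3 * G / 8 * ((2::real) powr (- x) * 2 powr (x / 2 + 1) * 2 powr (1/2)) * (pi powr (- x) * pi powr (1/2))"
    unfolding m sq by (simp add: power_divide mult_ac)
  also have "\<dots> = lam ^ 3 * G * 2 powr (- ((x + 3) / 2)) / pi powr (x - 1/2)"
    unfolding p2 pp by simp
  also have "\<dots> = lam ^ 3 * G * Ga / (pi powr (x - 1/2) * D powr ((x + 3) / 2)) * ((D / 2) powr ((x + 3) / 2) / Ga)"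
    unfolding dd using Ga Dp by (simp add: field_simps)
  finally show ?thesis .
qed

theorem proposition1:
  fixes n :: nat and lam :: real and y :: "nat \<Rightarrow> nat \<Rightarrow> real"
  defines "s11 \<equiv> Smat n y 1 1" and "s12 \<equiv> Smat n y 1 2" and "s22 \<equiv> Smat n y 2 2"
  defines "D \<equiv> (lam + s11) * (lam + s22) - (lam - \<bar>s12\<bar>)\<^sup>2"
  defines "F \<equiv> (\<lambda>t::real. Phi (lam * t powr (1/2) * (\<bar>s12\<bar> / lam - 1))
                  + exp (2 * lam * \<bar>s12\<bar> * t) * Phi (- lam * t powr (1/2) * (\<bar>s12\<bar> / lam + 1)))"
  assumes "n \<ge> 1" and "lam > 0"
    and "D / 2 > 0"
  shows "(marg_lik n y lam =
           (1 / C_BGL lam) * (lam ^ 3 * Gamma (real n / 2 + 1) * Gamma ((real n + 3) / 2)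
             / (pi powr (real n - 1/2) * D powr ((real n + 3) / 2)))
           * gamma_expect ((real n + 3) / 2) (D / 2) F)
         \<and> C_BGL lam = (LINT x:{0<..}|lborel. x powr (1/2) * (LINT u:{x..}|lborel. u powr (-1/2) * exp (- u)))
         \<and> \<bar>C_BGL lam - 0.67\<bar> < 0.005"
proof -
  note l = \<open>lam > 0\<close>
  have C: "C_BGL lam = 2 / 3" by (rule C_BGL_val[OF l])
  define A where "A = s11 + lam"
  define B where "B = s22 + lam"
  define k where "k = real n / 2"
  define J where "J = (\<integral>\<^sup>+t. ennreal (indicator {0<..} t * (t powr (k + 1/2) * (exp (- (A * B - (s12 + lam)\<^sup>2) * t / 2) * Phi (- (s12 + lam) * sqrt t) + exp (- (A * B - (s12 - lam)\<^sup>2) * t / 2) * Phi ((s12 - lam) * sqrt t)))) \<partial>lborel)"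
  have A0: "A > 0" unfolding A_def s11_def using l Smat_sq_nonneg[of n y 1] by simp
  have k0: "k \<ge> 0" and k1: "k > -1" unfolding k_def by simp_all
  have G1: "Gamma (k + 1) > 0" using k0 by (intro Gamma_real_pos) simp
  have DA: "D = A * B - (lam - \<bar>s12\<bar>)\<^sup>2" unfolding D_def A_def B_def by (simp add: mult.commute add.commute)
  have "marg_lik n y lam = (2 * pi) powr (- real n) * (lam / 2) ^ 3 / C_BGL lam *
     enn2real (\<integral>\<^sup>+w. ennreal (Hf k A B s12 lam w) \<partial>lborel)"
    unfolding A_def B_def k_def s11_def s12_def s22_def by (rule marg_lik_Hf)
  also have "(\<integral>\<^sup>+w. ennreal (Hf k A B s12 lam w) \<partial>lborel) = ennreal (Gamma (k + 1) * 2 powr (k + 1) * sqrt (2 * pi)) * J"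
    unfolding J_def by (rule main3[OF A0 k1])
  finally have M: "marg_lik n y lam = (2 * pi) powr (- real n) * (lam / 2) ^ 3 / C_BGL lam * (Gamma (k + 1) * 2 powr (k + 1) * sqrt (2 * pi)) * enn2real J"
    using G1 by (simp add: enn2real_mult)
  have GE: "gamma_expect ((real n + 3) / 2) (D / 2) F = (D / 2) powr ((real n + 3) / 2) / Gamma ((real n + 3) / 2) * enn2real J"
    unfolding J_def
    by (rule gexp[OF l \<open>D / 2 > 0\<close> _ k0 DA refl F_def[THEN meta_eq_to_obj_eq]]) (simp add: k_def field_simps)
  have Ga: "Gamma ((real n + 3) / 2) > 0" by (intro Gamma_real_pos) simp
  have D0: "D > 0" using \<open>D / 2 > 0\<close> by simp
  have K: "(2 * pi) powr (- real n) * (lam / 2) ^ 3 * (Gamma (k + 1) * 2 powr (real n / 2 + 1) * sqrt (2 * pi))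
       = lam ^ 3 * Gamma (k + 1) * Gamma ((real n + 3) / 2) / (pi powr (real n - 1/2) * D powr ((real n + 3) / 2)) * ((D / 2) powr ((real n + 3) / 2) / Gamma ((real n + 3) / 2))"
    by (rule const_eq[OF D0 Ga])
  have part1: "marg_lik n y lam =
           (1 / C_BGL lam) * (lam ^ 3 * Gamma (real n / 2 + 1) * Gamma ((real n + 3) / 2)
             / (pi powr (real n - 1/2) * D powr ((real n + 3) / 2)))
           * gamma_expect ((real n + 3) / 2) (D / 2) F"
  proof -
    have "marg_lik n y lam = ((2 * pi) powr (- real n) * (lam / 2) ^ 3 * (Gamma (k + 1) * 2 powr (real n / 2 + 1) * sqrt (2 * pi))) / C_BGL lam * enn2real J"
      unfolding M k_def by simp
    also have "\<dots> = (lam ^ 3 * Gamma (k + 1) * Gamma ((real n + 3) / 2) / (pi powr (real n - 1/2) * D powr ((real n + 3) / 2)) * ((D / 2) powr ((real n + 3) / 2) / Gamma ((real n + 3) / 2))) / C_BGL lam * enn2real J"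
      by (simp only: K)
    also have "\<dots> = (1 / C_BGL lam) * (lam ^ 3 * Gamma (real n / 2 + 1) * Gamma ((real n + 3) / 2)
             / (pi powr (real n - 1/2) * D powr ((real n + 3) / 2)))
           * gamma_expect ((real n + 3) / 2) (D / 2) F"
      unfolding GE k_def using Ga by (simp add: mult_ac)
    finally show ?thesis .
  qed
  show ?thesis
  proof (intro conjI)
    show "marg_lik n y lam =
           (1 / C_BGL lam) * (lam ^ 3 * Gamma (real n / 2 + 1) * Gamma ((real n + 3) / 2)
             / (pi powr (real n - 1/2) * D powr ((real n + 3) / 2)))
           * gamma_expect ((real n + 3) / 2) (D / 2) F" by (rule part1)
    show "C_BGL lam = (LINT x:{0<..}|lborel. x powr (1/2) * (LINT u:{x..}|lborel. u powr (-1/2) * exp (- u)))"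
      by (simp only: C GF_val)
    show "\<bar>C_BGL lam - 0.67\<bar> < 0.005" by (simp add: C)
  qed
qed

end
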